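(* With $w=-x^{q^n-1}$ and $z=-y^{q^n-1}$ in the basic function field $F$, one has $K(u)=K(z,w)$.
   Context: Standing setup: $p$ is a prime, $q$ a power of $p$, $n\ge2$, $\ell=q^n$, and $K$ is either $\mathbb{F}_\ell$ or its algebraic closure $\overline{\mathbb{F}}_\ell$. For $a\ge1$, $\mathrm{Tr}_a(T)=T+T^q+\cdots+T^{q^{a-1}}$. Fix integers $j,k\ge1$ with $n=j+k$, $\gcd(j,k)=1$ and $p\nmid j$, and let $\alpha\in\mathbb{F}_p$ be the inverse of $j$ modulo $p$. The basic function field is $F=K(x,y)$ where $x$ is transcendental over $K$ and $y$ is algebraic over $K(x)$ with $\mathrm{Tr}_j(y/x^{q^k})+\mathrm{Tr}_k(y^{q^j}/x)=1$. $u\in F$ is the unique element with $y/x^{q^k}=\mathrm{Tr}_k(u)+\alpha$ and $y^{q^j}/x=-\mathrm{Tr}_j(u)$. *)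

theory Defs
  imports "HOL-Computational_Algebra.Polynomial"
begin

definition is_subfield :: "'a::field set \<Rightarrow> bool" where
  "is_subfield L \<longleftrightarrow> 0 \<in> L \<and> 1 \<in> L \<and>
     (\<forall>a\<in>L. \<forall>b\<in>L. a + b \<in> L \<and> a - b \<in> L \<and> a * b \<in> L) \<and>
     (\<forall>a\<in>L. inverse a \<in> L)"

definition field_adj :: "'a::field set \<Rightarrow> 'a set \<Rightarrow> 'a set" where
  "field_adj K S = \<Inter>{L. is_subfield L \<and> K \<subseteq> L \<and> S \<subseteq> L}"

definition Tr :: "nat \<Rightarrow> nat \<Rightarrow> 'a::field \<Rightarrow> 'a" where
  "Tr q a t = (\<Sum>i<a. t ^ (q ^ i))"

definition transcendental_over :: "'a::field set \<Rightarrow> 'a \<Rightarrow> bool" where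
  "transcendental_over K x \<longleftrightarrow>
     (\<forall>P::'a poly. (\<forall>i. coeff P i \<in> K) \<and> P \<noteq> 0 \<longrightarrow> poly P x \<noteq> 0)"

definition is_finite_field_of_size :: "'a::field set \<Rightarrow> nat \<Rightarrow> bool" where
  "is_finite_field_of_size K l \<longleftrightarrow> is_subfield K \<and> finite K \<and> card K = l"

text \<open>K is an algebraic closure of F_l: an algebraically closed subfield all of whose
  elements are algebraic over the prime field (i.e. lie in some finite field F_(l^m)).\<close>
definition is_alg_closure_of_Fl :: "'a::field set \<Rightarrow> nat \<Rightarrow> bool" where
  "is_alg_closure_of_Fl K l \<longleftrightarrow> is_subfield K \<and>
     (\<forall>c\<in>K. \<exists>m\<ge>1. c ^ (l ^ m) = c) \<and>
     (\<forall>P::'a poly. (\<forall>i. coeff P i \<in> K) \<and> degree P \<ge> 1 \<longrightarrow> (\<exists>r\<in>K. poly P r = 0))"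

end

theory Submission
  imports Defs "HOL-Computational_Algebra.Primes"
begin

lemma char_eq:
  assumes "prime p" "of_nat p = (0::'a::field)"
  shows "CHAR('a) = p"
proof -
  have "CHAR('a) dvd p" using assms(2) of_nat_eq_0_iff_char_dvd by blast
  have n1: "CHAR('a) \<noteq> 1" using CHAR_not_1[where 'a='a] by simp
  have "CHAR('a) = 1 \<or> CHAR('a) = p" using \<open>CHAR('a) dvd p\<close> assms(1) unfolding prime_nat_iff by blast
  then show ?thesis using n1 by blast
qed

lemma frob_add:
  assumes "prime p" "of_nat p = (0::'a::field)" "Q = p ^ e"
  shows "((a::'a) + b) ^ Q = a ^ Q + b ^ Q"
  using freshmans_dream'[of Q e a b] char_eq[OF assms(1,2)] assms by simp

lemma frob_sum:
  assumes "prime p" "of_nat p = (0::'a::field)" "Q = p ^ e"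
  shows "(sum (f::'b \<Rightarrow> 'a) A) ^ Q = sum (\<lambda>i. f i ^ Q) A"
  using freshmans_dream_sum'[of Q e f A] char_eq[OF assms(1,2)] assms by simp

lemma frob_diff:
  assumes "prime p" "of_nat p = (0::'a::field)" "Q = p ^ e"
  shows "((a::'a) - b) ^ Q = a ^ Q - b ^ Q"
proof -
  have "((a - b) + b) ^ Q = (a-b)^Q + b^Q" by (rule frob_add[OF assms])
  then show ?thesis by simp
qed

lemma frob_uminus:
  assumes "prime p" "of_nat p = (0::'a::field)" "Q = p ^ e"
  shows "(- (a::'a)) ^ Q = - (a ^ Q)"
  using frob_diff[OF assms, of 0 a] assms prime_gt_0_nat[OF assms(1)] by simp

lemma frob_of_nat:
  assumes "prime p" "of_nat p = (0::'a::field)" "Q = p ^ e"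
  shows "(of_nat m :: 'a) ^ Q = of_nat m"
proof (induction m)
  case 0 then show ?case using assms prime_gt_0_nat[OF assms(1)] by simp
next
  case (Suc m)
  have "(of_nat m + 1 :: 'a) ^ Q = of_nat m ^ Q + 1 ^ Q" by (rule frob_add[OF assms])
  then show ?case using Suc by (simp add: add.commute)
qed

lemma Tr_add:
  assumes "prime p" "of_nat p = (0::'a::field)" "q = p ^ e"
  shows "Tr q (a + b) (t::'a) = Tr q a t + (Tr q b t) ^ (q ^ a)"
proof (induction b)
  case 0 then show ?case using assms prime_gt_0_nat[OF assms(1)] by (simp add: Tr_def)
next
  case (Suc b)
  have qa: "q ^ a = p ^ (e*a)" using assms(3) by (simp add: power_mult)
  have "Tr q (Suc b) t ^ (q^a) = (Tr q b t + t ^ (q ^ b)) ^ (q ^ a)" by (simp add: Tr_def)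
  also have "\<dots> = Tr q b t ^ (q^a) + t ^ (q^(a+b))"
    using frob_add[OF assms(1,2) qa] by (simp add: power_mult[symmetric] power_add mult.commute)
  finally show ?case using Suc by (simp add: Tr_def)
qed

lemma euclid_gcd:
  fixes P :: "nat \<Rightarrow> bool" and a b :: nat
  assumes step: "\<And>a b. P a \<Longrightarrow> P b \<Longrightarrow> b < a \<Longrightarrow> P (a - b)"
  shows "P a \<Longrightarrow> P b \<Longrightarrow> 0 < a \<Longrightarrow> 0 < b \<Longrightarrow> P (gcd a b)"
proof (induction "a + b" arbitrary: a b rule: less_induct)
  case less
  show ?case
  proof (cases a b rule: linorder_cases)
    case equal then show ?thesis using less by simp
  next
    case greater
    have "P (gcd (a - b) b)"
      using less.hyps[of "a - b" b] step[OF less.prems(1,2) greater] less.prems greater by simp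
    then show ?thesis using gcd_diff1_nat[of b a] greater by simp
  next
    case less2: less
    have "P (gcd a (b - a))"
      using less.hyps[of a "b - a"] step[OF less.prems(2,1) less2] less.prems less2 by simp
    then show ?thesis using less2 gcd_diff1_nat[of a b] by (simp add: gcd.commute)
  qed
qed

lemma sf_field_adj: "is_subfield (field_adj K S)"
  unfolding is_subfield_def field_adj_def by auto

lemma field_adj_K: "K \<subseteq> field_adj K S" and field_adj_S: "S \<subseteq> field_adj K S"
  unfolding field_adj_def by auto

lemma field_adj_min: "is_subfield M \<Longrightarrow> K \<subseteq> M \<Longrightarrow> S \<subseteq> M \<Longrightarrow> field_adj K S \<subseteq> M"
  unfolding field_adj_def by auto

context fixes L :: "'a::field set" assumes L: "is_subfield L"
begin
lemma sf_0: "0 \<in> L" and sf_1: "1 \<in> L" using L unfolding is_subfield_def by auto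
lemma sf_add: "a \<in> L \<Longrightarrow> b \<in> L \<Longrightarrow> a + b \<in> L" using L unfolding is_subfield_def by auto
lemma sf_diff: "a \<in> L \<Longrightarrow> b \<in> L \<Longrightarrow> a - b \<in> L" using L unfolding is_subfield_def by auto
lemma sf_mult: "a \<in> L \<Longrightarrow> b \<in> L \<Longrightarrow> a * b \<in> L" using L unfolding is_subfield_def by auto
lemma sf_inv: "a \<in> L \<Longrightarrow> inverse a \<in> L" using L unfolding is_subfield_def by auto
lemma sf_div: "a \<in> L \<Longrightarrow> b \<in> L \<Longrightarrow> a / b \<in> L"
  using sf_mult sf_inv by (simp add: divide_inverse)
lemma sf_uminus: "a \<in> L \<Longrightarrow> - a \<in> L" using sf_diff[OF sf_0] by fastforce
lemma sf_pow: "a \<in> L \<Longrightarrow> a ^ n \<in> L" by (induction n) (auto intro: sf_1 sf_mult)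
lemma sf_sum: "(\<And>i. i \<in> A \<Longrightarrow> f i \<in> L) \<Longrightarrow> sum f A \<in> L"
  by (induction A rule: infinite_finite_induct) (auto intro: sf_0 sf_add)
lemma sf_of_nat: "of_nat m \<in> L" by (induction m) (auto intro: sf_0 sf_1 sf_add)
lemma sf_Tr: "a \<in> L \<Longrightarrow> Tr q m a \<in> L" unfolding Tr_def by (auto intro: sf_sum sf_pow)
end
theorem lemma2p9:
  fixes p q j k :: nat and K :: "'a::field set" and x y u :: 'a
  assumes "prime p" and "of_nat p = (0::'a)"
    and "\<exists>e\<ge>1. q = p ^ e"
    and "j \<ge> 1" and "k \<ge> 1" and "j + k \<ge> 2"
    and "coprime j k" and "\<not> p dvd j"
    and "is_finite_field_of_size K (q ^ (j + k)) \<or> is_alg_closure_of_Fl K (q ^ (j + k))"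
    and "transcendental_over K x"
    and "Tr q j (y / x ^ (q ^ k)) + Tr q k (y ^ (q ^ j) / x) = 1"
    and "u \<in> field_adj K {x, y}"
    and "y / x ^ (q ^ k) = Tr q k u + inverse (of_nat j)"
    and "y ^ (q ^ j) / x = - Tr q j u"
  shows "field_adj K {u} =
         field_adj K {- (y ^ (q ^ (j + k) - 1)), - (x ^ (q ^ (j + k) - 1))}"
proof -
  note pr = assms(1) and ch = assms(2)
  obtain e where e: "e \<ge> 1" "q = p ^ e" using assms(3) by blast
  have p2: "p \<ge> 2" using prime_ge_2_nat[OF pr] .
  have q2: "q \<ge> 2"
  proof -
    have "p ^ 1 \<le> p ^ e" using e(1) p2 by (intro power_increasing) auto
    then show ?thesis using e p2 by simp
  qed
  have qpow: "\<And>i. q ^ i = p ^ (e * i)" using e(2) by (simp add: power_mult)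
  have qpos: "\<And>i. 0 < q ^ i" using q2 by simp
  have hK: "is_subfield K" using assms(9)
    unfolding is_finite_field_of_size_def is_alg_closure_of_Fl_def by blast
  define l where "l = q ^ (j + k)"
  have l2: "l \<ge> 2"
  proof -
    have "q ^ 1 \<le> q ^ (j+k)" using assms(4) q2 by (intro power_increasing) auto
    then show ?thesis using q2 l_def by simp
  qed
  have x0: "x \<noteq> 0"
  proof
    assume "x = 0"
    have c: "\<forall>i. coeff [:0, 1:] i \<in> K"
      using sf_0[OF hK] sf_1[OF hK] by (auto simp: coeff_pCons split: nat.splits)
    have "poly [:0, 1:] x \<noteq> 0"
      using assms(10) c unfolding transcendental_over_def by (metis pCons_eq_0_iff one_neq_zero)
    then show False using \<open>x = 0\<close> by simp
  qed
  have X1: "x ^ (l - 1) \<noteq> 1"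
  proof
    assume h: "x ^ (l - 1) = 1"
    define P :: "'a poly" where "P = monom 1 (l - 1) - 1"
    have cP: "\<And>i. coeff P i \<in> K"
      unfolding P_def using sf_0[OF hK] sf_1[OF hK] sf_diff[OF hK]
      by (auto simp: coeff_monom)
    have "coeff P (l - 1) = 1" using l2 unfolding P_def
      by (simp add: coeff_monom)
    then have "P \<noteq> 0" by auto
    then have "poly P x \<noteq> 0" using assms(10) cP unfolding transcendental_over_def by blast
    then show False using h unfolding P_def by (simp add: poly_monom)
  qed
  have y0: "y \<noteq> 0"
  proof
    assume "y = 0"
    then have "Tr q j (y / x ^ (q ^ k)) + Tr q k (y ^ (q ^ j) / x) = 0"
      using q2 by (simp add: Tr_def power_0_left)
    then show False using assms(11) by simp
  qed
  define A where "A = y / x ^ (q ^ k)"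
  define B where "B = y ^ (q ^ j) / x"
  define X where "X = x ^ (l - 1)"
  define Y where "Y = y ^ (l - 1)"
  define \<alpha> where "\<alpha> = (inverse (of_nat j) :: 'a)"
  have A0: "A \<noteq> 0" using x0 y0 by (simp add: A_def)
  have X0: "X \<noteq> 0" using x0 by (simp add: X_def)
  have yl: "y ^ l = Y * y" using l2 unfolding Y_def
    by (metis Suc_diff_1 less_le_trans pos2 power_Suc2)
  have xl: "x ^ l = X * x" using l2 unfolding X_def
    by (metis Suc_diff_1 less_le_trans pos2 power_Suc2)
  have F1: "B ^ (q ^ k) = Y * A"
  proof -
    have "B ^ (q ^ k) = y ^ l / x ^ (q ^ k)"
      unfolding B_def l_def by (simp add: power_divide power_mult[symmetric] power_add mult.commute)
    then show ?thesis using yl by (simp add: A_def)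
  qed
  have F2: "B = X * A ^ (q ^ j)"
  proof -
    have "A ^ (q ^ j) = y ^ (q ^ j) / x ^ l"
      unfolding A_def l_def by (simp add: power_divide power_mult[symmetric] power_add mult.commute)
    then show ?thesis using xl x0 X0 by (simp add: B_def)
  qed
  have Tk: "Tr q k u = A - \<alpha>" using assms(13) by (simp add: A_def \<alpha>_def)
  have Tj: "Tr q j u = - B" using assms(14) by (simp add: B_def)
  have Tsym: "Tr q j u + Tr q k u ^ (q ^ j) = Tr q k u + Tr q j u ^ (q ^ k)"
    using Tr_add[OF pr ch e(2), of j k u] Tr_add[OF pr ch e(2), of k j u] by (simp add: add.commute)
  have alpha_fr: "\<alpha> ^ (q ^ j) = \<alpha>"
    unfolding \<alpha>_def using frob_of_nat[OF pr ch qpow, of j] by (simp add: power_inverse)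
  have rel: "(1 - Y) * A = (1 - X) * A ^ (q ^ j)"
  proof -
    have a: "(A - \<alpha>) ^ (q ^ j) = A ^ (q ^ j) - \<alpha>"
      using frob_diff[OF pr ch qpow] alpha_fr by simp
    have b: "(- B) ^ (q ^ k) = - (Y * A)"
      using frob_uminus[OF pr ch qpow] F1 by simp
    from Tsym have "- B + (A - \<alpha>) ^ (q ^ j) = A - \<alpha> + (- B) ^ (q ^ k)" by (simp add: Tk Tj)
    then have "- (X * A ^ (q ^ j)) + A ^ (q ^ j) = A - Y * A" using a b F2 by (simp add: algebra_simps)
    then show ?thesis by (simp add: algebra_simps)
  qed
  have X1': "1 - X \<noteq> 0" using X1 by (simp add: X_def)
  define L1 where "L1 = field_adj K {u}"
  have sL1: "is_subfield L1" unfolding L1_def by (rule sf_field_adj)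
  have uL1: "u \<in> L1" using field_adj_S unfolding L1_def by blast
  have KL1: "K \<subseteq> L1" using field_adj_K unfolding L1_def by blast
  have aK: "\<alpha> \<in> K" unfolding \<alpha>_def by (intro sf_inv[OF hK] sf_of_nat[OF hK])
  have AL1: "A \<in> L1"
  proof -
    have "A = Tr q k u + \<alpha>" using Tk by simp
    then show ?thesis using sf_add[OF sL1] sf_Tr[OF sL1 uL1] aK KL1 by auto
  qed
  have BL1: "B \<in> L1"
  proof -
    have "B = - Tr q j u" using Tj by simp
    then show ?thesis using sf_uminus[OF sL1] sf_Tr[OF sL1 uL1] by auto
  qed
  have XL1: "X \<in> L1"
  proof -
    have "X = B / A ^ (q ^ j)" using F2 A0 by simp
    then show ?thesis using sf_div[OF sL1] sf_pow[OF sL1] AL1 BL1 by auto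
  qed
  have YL1: "Y \<in> L1"
  proof -
    have "Y = B ^ (q ^ k) / A" using F1 A0 by simp
    then show ?thesis using sf_div[OF sL1] sf_pow[OF sL1] AL1 BL1 by auto
  qed
  have inc1: "field_adj K {- Y, - X} \<subseteq> L1"
    using field_adj_min[OF sL1 KL1] sf_uminus[OF sL1] XL1 YL1 by auto
  define L2 where "L2 = field_adj K {- Y, - X}"
  have sL2: "is_subfield L2" unfolding L2_def by (rule sf_field_adj)
  have KL2: "K \<subseteq> L2" using field_adj_K unfolding L2_def by blast
  have XL2: "X \<in> L2" and YL2: "Y \<in> L2"
    using field_adj_S[of "{- Y, - X}" K] sf_uminus[OF sL2] unfolding L2_def by fastforce+
  define P where "P m = (\<exists>c\<in>L2. A ^ (q ^ m) = c * A)" for m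
  have Pn: "P (j + k)"
  proof -
    have "A ^ (q ^ (j + k)) = (A ^ (q ^ j)) ^ (q ^ k)" by (simp add: power_add power_mult)
    also have "\<dots> = (B / X) ^ (q ^ k)" using F2 X0 by simp
    also have "\<dots> = (Y / X ^ (q ^ k)) * A" using F1 by (simp add: power_divide)
    finally show ?thesis unfolding P_def
      using sf_div[OF sL2] sf_pow[OF sL2] XL2 YL2 by blast
  qed
  have Pj: "P j"
  proof -
    have "A ^ (q ^ j) = ((1 - Y) / (1 - X)) * A" using rel X1' by (simp add: field_simps)
    then show ?thesis unfolding P_def
      using sf_div[OF sL2] sf_diff[OF sL2] sf_1[OF sL2] XL2 YL2 by blast
  qed
  have Pstep: "P (a - b)" if "P a" "P b" "b < a" for a b
  proof -
    obtain ca where ca: "ca \<in> L2" "A ^ (q ^ a) = ca * A" using \<open>P a\<close> unfolding P_def by blast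
    obtain cb where cb: "cb \<in> L2" "A ^ (q ^ b) = cb * A" using \<open>P b\<close> unfolding P_def by blast
    define Q where "Q = q ^ (a - b)"
    have "A ^ (q ^ a) = (A ^ (q ^ b)) ^ Q"
      using \<open>b < a\<close> unfolding Q_def by (simp add: power_mult[symmetric] power_add[symmetric])
    then have eq: "ca * A = cb ^ Q * A ^ Q" using ca cb by (simp add: power_mult_distrib)
    have cb0: "cb \<noteq> 0" using cb(2) A0 by auto
    have "A ^ Q = (ca / cb ^ Q) * A" using eq cb0 by (simp add: field_simps)
    then show ?thesis unfolding P_def Q_def
      using sf_div[OF sL2] sf_pow[OF sL2] ca(1) cb(1) by blast
  qed
  have "P (gcd (j + k) j)"
    using euclid_gcd[of P, OF Pstep Pn Pj] assms(4) by auto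
  moreover have "gcd (j + k) j = 1"
    using assms(7) by (metis coprime_iff_gcd_eq_1 gcd.commute gcd_add2)
  ultimately have P1: "P 1" by simp
  have Pall: "P i" for i
  proof (induction i)
    case 0 then show ?case unfolding P_def using sf_1[OF sL2] by auto
  next
    case (Suc i)
    obtain c where c: "c \<in> L2" "A ^ q = c * A" using P1 unfolding P_def by auto
    obtain d where d: "d \<in> L2" "A ^ (q ^ i) = d * A" using Suc unfolding P_def by auto
    have "A ^ (q ^ Suc i) = (A ^ (q ^ i)) ^ q" by (simp add: power_mult[symmetric] mult.commute)
    also have "\<dots> = d ^ q * c * A" using c d by (simp add: power_mult_distrib)
    finally show ?case unfolding P_def using sf_mult[OF sL2] sf_pow[OF sL2] c d by blast
  qed
  then have "\<forall>i. \<exists>c. c \<in> L2 \<and> A ^ (q ^ i) = c * A" unfolding P_def by blast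
  then obtain d where d: "\<And>i. d i \<in> L2" "\<And>i. A ^ (q ^ i) = d i * A" by metis
  define D where "D = (\<Sum>i<j. d i) + (\<Sum>i<k. X ^ (q ^ i) * d (j + i))"
  have DL2: "D \<in> L2" unfolding D_def
    by (intro sf_add[OF sL2] sf_sum[OF sL2] sf_mult[OF sL2] sf_pow[OF sL2] d(1) XL2)
  have "Tr q j A + Tr q k B = 1" using assms(11) by (simp add: A_def B_def)
  moreover have "Tr q j A = (\<Sum>i<j. d i) * A" unfolding Tr_def using d(2) by (simp add: sum_distrib_right)
  moreover have "Tr q k B = (\<Sum>i<k. X ^ (q ^ i) * d (j + i)) * A"
  proof -
    have "Tr q k B = (\<Sum>i<k. X ^ (q ^ i) * A ^ (q ^ (j + i)))"
      unfolding Tr_def F2 by (simp add: power_mult_distrib power_mult[symmetric] power_add)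
    then show ?thesis using d(2) by (simp add: sum_distrib_right mult.assoc)
  qed
  ultimately have "D * A = 1" unfolding D_def by (simp add: algebra_simps)
  then have "inverse D = A" by (rule inverse_unique)
  then have "A = inverse D" by simp
  then have AL2: "A \<in> L2" using sf_inv[OF sL2] DL2 by simp
  have TkL2: "Tr q k u \<in> L2" using Tk sf_diff[OF sL2] AL2 aK KL2 by auto
  have TjL2: "Tr q j u \<in> L2" using Tj F2 sf_uminus[OF sL2] sf_mult[OF sL2] sf_pow[OF sL2] AL2 XL2 by auto
  define P' where "P' m = (Tr q m u \<in> L2)" for m
  have P'step: "P' (a - b)" if "P' a" "P' b" "b < a" for a b
  proof -
    have "Tr q a u = Tr q (a - b) u + Tr q b u ^ (q ^ (a - b))"
      using Tr_add[OF pr ch e(2), of "a - b" b u] \<open>b < a\<close> by simp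
    then have "Tr q (a - b) u = Tr q a u - Tr q b u ^ (q ^ (a - b))" by simp
    then show ?thesis using that sf_diff[OF sL2] sf_pow[OF sL2] unfolding P'_def by auto
  qed
  have "P' (gcd j k)" using euclid_gcd[of P', OF P'step] TjL2 TkL2 assms(4,5) unfolding P'_def by auto
  then have "Tr q 1 u \<in> L2" using assms(7) unfolding P'_def by simp
  then have uL2: "u \<in> L2" by (simp add: Tr_def)
  have inc2: "L1 \<subseteq> L2" unfolding L1_def using field_adj_min[OF sL2 KL2] uL2 by auto
  have "L1 = L2" using inc1 inc2 unfolding L2_def by (rule equalityI[rotated])
  then show ?thesis unfolding L1_def L2_def X_def Y_def l_def .
qed

end
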